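(* Let $S$ be a straight left I-order in an inverse semigroup $Q$, and let $a,b,c,d\in S$ with $a\,\mathcal{R}^Q\,b$ and $c\,\mathcal{R}^Q\,d$. Then $a^{-1}b=c^{-1}d$ in $Q$ if and only if there exist $x,y\in S$ such that \[xa=yc,\quad xb=yd,\quad x\,\mathcal{R}^Q\,xa\,\mathcal{L}^Q\,a,\quad y\,\mathcal{R}^Q\,yc\,\mathcal{L}^Q\,c.\]
   Context: $a^{-1}$ is the unique inverse of $a$ in $Q$; $\mathcal{R}^Q,\mathcal{L}^Q$ are Green's relations of $Q$. A subsemigroup $S$ of $Q$ is a straight left I-order in $Q$ if every $q\in Q$ can be written $q=a^{-1}b$ with $a,b\in S$ and $a\,\mathcal{R}^Q\,b$. *)

theory Defs
  imports Main
begin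

text \<open>The inverse semigroup Q is the whole carrier of a type of class semigroup_mult.\<close>

definition inverse_semigroup :: "'a::semigroup_mult itself \<Rightarrow> bool" where
  "inverse_semigroup T \<longleftrightarrow> (\<forall>a::'a. \<exists>!b. a * b * a = a \<and> b * a * b = b)"

definition sinv :: "'a::semigroup_mult \<Rightarrow> 'a" where
  "sinv a = (THE b. a * b * a = a \<and> b * a * b = b)"

text \<open>Green's relations: a R b iff aQ^1 = bQ^1; a L b iff Q^1 a = Q^1 b.\<close>

definition greenR :: "'a::semigroup_mult \<Rightarrow> 'a \<Rightarrow> bool" where
  "greenR a b \<longleftrightarrow> (a = b \<or> (\<exists>u. a = b * u)) \<and> (b = a \<or> (\<exists>u. b = a * u))"

definition greenL :: "'a::semigroup_mult \<Rightarrow> 'a \<Rightarrow> bool" where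
  "greenL a b \<longleftrightarrow> (a = b \<or> (\<exists>u. a = u * b)) \<and> (b = a \<or> (\<exists>u. b = u * a))"

definition subsemigroup :: "'a::semigroup_mult set \<Rightarrow> bool" where
  "subsemigroup S \<longleftrightarrow> (\<forall>a\<in>S. \<forall>b\<in>S. a * b \<in> S)"

definition straight_left_I_order :: "'a::semigroup_mult set \<Rightarrow> bool" where
  "straight_left_I_order S \<longleftrightarrow> subsemigroup S \<and>
     (\<forall>q::'a. \<exists>a\<in>S. \<exists>b\<in>S. q = sinv a * b \<and> greenR a b)"

end

theory Submission
  imports Defs
begin

lemma sinv_ax:
  assumes I: "inverse_semigroup TYPE('a::semigroup_mult)"
  shows "(a::'a) * sinv a * a = a \<and> sinv a * a * sinv a = sinv a"
proof -
  have "\<exists>!b. a * b * a = a \<and> b * a * b = b" using I unfolding inverse_semigroup_def by blast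
  then show ?thesis unfolding sinv_def by (rule theI')
qed

lemma sinv_uniq:
  assumes I: "inverse_semigroup TYPE('a::semigroup_mult)"
    and "(a::'a) * b * a = a" "b * a * b = b"
  shows "sinv a = b"
proof -
  have "\<exists>!b. a * b * a = a \<and> b * a * b = b" using I unfolding inverse_semigroup_def by blast
  then show ?thesis unfolding sinv_def by (rule the1_equality) (simp add: assms(2,3))
qed

lemma sinv1:
  assumes I: "inverse_semigroup TYPE('a::semigroup_mult)"
  shows "(a::'a) * (sinv a * a) = a" "a * (sinv a * (a * z)) = a * z"
    "sinv a * (a * sinv a) = sinv a" "sinv a * (a * (sinv a * z)) = sinv a * z"
  using sinv_ax[OF I, of a] by (auto simp: mult.assoc[symmetric])

lemma idem_comm:
  assumes I: "inverse_semigroup TYPE('a::semigroup_mult)"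
    and e: "(e::'a) * e = e" and f: "f * f = f"
  shows "e * f = f * e"
proof -
  have e2: "e * (e * z) = e * z" for z using e by (simp add: mult.assoc[symmetric])
  have f2: "f * (f * z) = f * z" for z using f by (simp add: mult.assoc[symmetric])
  have gen: "p * q * (p * q) = p * q" if p: "p * p = p" and q: "q * q = q" for p q :: 'a
  proof -
    have p2: "p * (p * z) = p * z" for z using p by (simp add: mult.assoc[symmetric])
    have q2: "q * (q * z) = q * z" for z using q by (simp add: mult.assoc[symmetric])
    define x where "x = sinv (p * q)"
    have x1: "p * (q * (x * (p * q))) = p * q" and x2: "x * (p * (q * x)) = x"
      using sinv_ax[OF I, of "p*q"] unfolding x_def by (auto simp: mult.assoc)
    have "sinv (p * q) = q * x * p"
    proof (rule sinv_uniq[OF I])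
      show "p * q * (q * x * p) * (p * q) = p * q"
        by (simp add: mult.assoc p2 q2 p q x1)
      have "q * x * p * (p * q) * (q * x * p) = q * (x * (p * (q * x))) * p"
        by (simp add: mult.assoc p2 q2 p q)
      then show "q * x * p * (p * q) * (q * x * p) = q * x * p" using x2 by simp
    qed
    then have xe: "x = q * x * p" unfolding x_def .
    have xx: "x * x = x"
    proof -
      have "x * x = q * (x * (p * (q * x))) * p" by (subst (1 2) xe) (simp add: mult.assoc)
      also have "\<dots> = x" using x2 xe by simp
      finally show ?thesis .
    qed
    have "sinv x = x" by (rule sinv_uniq[OF I]) (simp_all add: xx)
    moreover have "sinv x = p * q"
      by (rule sinv_uniq[OF I]) (simp_all add: mult.assoc x1 x2)
    ultimately have "p * q = x" by simp
    then show ?thesis using xx by simp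
  qed
  have ef: "e * f * (e * f) = e * f" by (rule gen[OF e f])
  have fe: "f * e * (f * e) = f * e" by (rule gen[OF f e])
  have "sinv (e * f) = e * f" by (rule sinv_uniq[OF I]) (simp_all add: ef)
  moreover have "sinv (e * f) = f * e"
  proof (rule sinv_uniq[OF I])
    show "e * f * (f * e) * (e * f) = e * f"
      using ef by (simp add: mult.assoc e2 f2 e f)
    show "f * e * (e * f) * (f * e) = f * e"
      using fe by (simp add: mult.assoc e2 f2 e f)
  qed
  ultimately show ?thesis by simp
qed

lemma idem_aa:
  assumes I: "inverse_semigroup TYPE('a::semigroup_mult)"
  shows "(a::'a) * sinv a * (a * sinv a) = a * sinv a" "sinv a * a * (sinv a * a) = sinv a * a"
  using sinv1[OF I, of a] by (simp_all add: mult.assoc)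

lemma sinv_sinv:
  assumes I: "inverse_semigroup TYPE('a::semigroup_mult)"
  shows "sinv (sinv (a::'a)) = a"
  by (rule sinv_uniq[OF I]) (simp_all add: mult.assoc sinv1[OF I])

lemma sinv_mult:
  assumes I: "inverse_semigroup TYPE('a::semigroup_mult)"
  shows "sinv ((a::'a) * b) = sinv b * sinv a"
proof (rule sinv_uniq[OF I])
  have c: "b * sinv b * (sinv a * a) = sinv a * a * (b * sinv b)"
    by (rule idem_comm[OF I idem_aa(1)[OF I] idem_aa(2)[OF I]])
  have "a * b * (sinv b * sinv a) * (a * b) = a * (b * sinv b * (sinv a * a)) * b"
    by (simp add: mult.assoc)
  also have "\<dots> = a * (sinv a * a * (b * sinv b)) * b" by (simp add: c)
  also have "\<dots> = a * b" by (simp add: mult.assoc sinv1[OF I])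
  finally show "a * b * (sinv b * sinv a) * (a * b) = a * b" .
  have "sinv b * sinv a * (a * b) * (sinv b * sinv a) = sinv b * (sinv a * a * (b * sinv b)) * sinv a"
    by (simp add: mult.assoc)
  also have "\<dots> = sinv b * (b * sinv b * (sinv a * a)) * sinv a" by (simp add: c)
  also have "\<dots> = sinv b * sinv a" by (simp add: mult.assoc sinv1[OF I])
  finally show "sinv b * sinv a * (a * b) * (sinv b * sinv a) = sinv b * sinv a" .
qed

lemma greenR_iff:
  assumes I: "inverse_semigroup TYPE('a::semigroup_mult)"
  shows "greenR (a::'a) b \<longleftrightarrow> a * sinv a = b * sinv b"
proof
  assume eq: "a * sinv a = b * sinv b"
  have "a = a * sinv a * a" using sinv1(1)[OF I, of a] by (simp add: mult.assoc)
  also have "\<dots> = b * sinv b * a" by (simp only: eq)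
  finally have 1: "a = b * (sinv b * a)" by (simp add: mult.assoc)
  have "b = b * sinv b * b" using sinv1(1)[OF I, of b] by (simp add: mult.assoc)
  also have "\<dots> = a * sinv a * b" by (simp only: eq)
  finally have 2: "b = a * (sinv a * b)" by (simp add: mult.assoc)
  show "greenR a b" unfolding greenR_def using 1 2 by blast
next
  assume g: "greenR a b"
  have h1: "b * sinv b * a = a"
  proof -
    have "a = b \<or> (\<exists>u. a = b * u)" using g unfolding greenR_def by blast
    then show ?thesis
    proof
      assume "a = b" then show ?thesis using sinv1(1)[OF I, of a] by (simp add: mult.assoc)
    next
      assume "\<exists>u. a = b * u"
      then obtain u where "a = b * u" by blast
      then show ?thesis by (simp add: mult.assoc sinv1(2)[OF I])
    qed
  qed
  have h2: "a * sinv a * b = b"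
  proof -
    have "b = a \<or> (\<exists>u. b = a * u)" using g unfolding greenR_def by blast
    then show ?thesis
    proof
      assume "b = a" then show ?thesis using sinv1(1)[OF I, of a] by (simp add: mult.assoc)
    next
      assume "\<exists>u. b = a * u"
      then obtain u where "b = a * u" by blast
      then show ?thesis by (simp add: mult.assoc sinv1(2)[OF I])
    qed
  qed
  have "a * sinv a = b * sinv b * (a * sinv a)" using h1 by (simp add: mult.assoc[symmetric])
  also have "\<dots> = a * sinv a * (b * sinv b)"
    by (rule idem_comm[OF I idem_aa(1)[OF I] idem_aa(1)[OF I]])
  also have "\<dots> = b * sinv b" using h2 by (simp add: mult.assoc[symmetric])
  finally show "a * sinv a = b * sinv b" .
qed

lemma greenL_iff:
  assumes I: "inverse_semigroup TYPE('a::semigroup_mult)"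
  shows "greenL (a::'a) b \<longleftrightarrow> sinv a * a = sinv b * b"
proof
  assume eq: "sinv a * a = sinv b * b"
  have "a = a * (sinv a * a)" using sinv1(1)[OF I, of a] by simp
  also have "\<dots> = a * (sinv b * b)" by (simp only: eq)
  finally have 1: "a = (a * sinv b) * b" by (simp add: mult.assoc)
  have "b = b * (sinv b * b)" using sinv1(1)[OF I, of b] by simp
  also have "\<dots> = b * (sinv a * a)" by (simp only: eq)
  finally have 2: "b = (b * sinv a) * a" by (simp add: mult.assoc)
  show "greenL a b" unfolding greenL_def using 1 2 by blast
next
  assume g: "greenL a b"
  have h1: "a * (sinv b * b) = a"
  proof -
    have "a = b \<or> (\<exists>u. a = u * b)" using g unfolding greenL_def by blast
    then show ?thesis
    proof
      assume "a = b" then show ?thesis using sinv1(1)[OF I, of a] by simp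
    next
      assume "\<exists>u. a = u * b"
      then obtain u where "a = u * b" by blast
      then show ?thesis by (simp add: mult.assoc sinv1(1)[OF I])
    qed
  qed
  have h2: "b * (sinv a * a) = b"
  proof -
    have "b = a \<or> (\<exists>u. b = u * a)" using g unfolding greenL_def by blast
    then show ?thesis
    proof
      assume "b = a" then show ?thesis using sinv1(1)[OF I, of a] by simp
    next
      assume "\<exists>u. b = u * a"
      then obtain u where "b = u * a" by blast
      then show ?thesis by (simp add: mult.assoc sinv1(1)[OF I])
    qed
  qed
  have "sinv a * a = sinv a * a * (sinv b * b)" using h1 by (simp add: mult.assoc)
  also have "\<dots> = sinv b * b * (sinv a * a)"
    by (rule idem_comm[OF I idem_aa(2)[OF I] idem_aa(2)[OF I]])
  also have "\<dots> = sinv b * b" using h2 by (simp add: mult.assoc)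
  finally show "sinv a * a = sinv b * b" .
qed


theorem lemma3p4:
  fixes S :: "'a::semigroup_mult set" and a b c d :: 'a
  assumes "inverse_semigroup TYPE('a)"
    and "straight_left_I_order S"
    and "a \<in> S" "b \<in> S" "c \<in> S" "d \<in> S"
    and "greenR a b" "greenR c d"
  shows "sinv a * b = sinv c * d \<longleftrightarrow>
    (\<exists>x\<in>S. \<exists>y\<in>S. x * a = y * c \<and> x * b = y * d \<and>
       greenR x (x * a) \<and> greenL (x * a) a \<and>
       greenR y (y * c) \<and> greenL (y * c) c)"
proof -
  note I = assms(1)
  note s1 = sinv1[OF I]
  have Rk: "p * (sinv p * q) = q" if "greenR p q" for p q :: 'a
  proof -
    have "p * sinv p = q * sinv q" using that greenR_iff[OF I] by blast
    then show ?thesis using s1(1)[of q] by (metis mult.assoc)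
  qed
  have Ra: "a * (sinv a * b) = b" by (rule Rk[OF assms(7)])
  have Rc: "c * (sinv c * d) = d" by (rule Rk[OF assms(8)])
  have RR: "a * sinv a = b * sinv b" "c * sinv c = d * sinv d"
    using assms(7,8) greenR_iff[OF I] by blast+
  show ?thesis
  proof
    assume eq: "sinv a * b = sinv c * d"
    obtain x y where xS: "x \<in> S" and yS: "y \<in> S" and q: "a * sinv c = sinv x * y"
      and gxy: "greenR x y"
      using assms(2) unfolding straight_left_I_order_def by blast
    have xy: "x * sinv x = y * sinv y" using gxy greenR_iff[OF I] by blast
    have ac: "sinv a * a = sinv c * c"
    proof -
      have "sinv a * b * sinv (sinv a * b) = sinv a * (b * sinv b) * a"
        by (simp add: sinv_mult[OF I] sinv_sinv[OF I] mult.assoc)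
      also have "\<dots> = sinv a * a" by (simp add: RR(1)[symmetric] mult.assoc s1)
      finally have 1: "sinv a * b * sinv (sinv a * b) = sinv a * a" .
      have "sinv c * d * sinv (sinv c * d) = sinv c * (d * sinv d) * c"
        by (simp add: sinv_mult[OF I] sinv_sinv[OF I] mult.assoc)
      also have "\<dots> = sinv c * c" by (simp add: RR(2)[symmetric] mult.assoc s1)
      finally have 2: "sinv c * d * sinv (sinv c * d) = sinv c * c" .
      show ?thesis using 1 2 eq by simp
    qed
    have xx: "sinv x * x = a * sinv a"
    proof -
      have "sinv x * y * sinv (sinv x * y) = sinv x * (y * sinv y) * x"
        by (simp add: sinv_mult[OF I] sinv_sinv[OF I] mult.assoc)
      also have "\<dots> = sinv x * x" by (simp add: xy[symmetric] mult.assoc s1)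
      finally have 1: "sinv x * y * sinv (sinv x * y) = sinv x * x" .
      have "a * sinv c * sinv (a * sinv c) = a * (sinv c * c) * sinv a"
        by (simp add: sinv_mult[OF I] sinv_sinv[OF I] mult.assoc)
      also have "\<dots> = a * sinv a" by (simp add: ac[symmetric] mult.assoc s1)
      finally have 2: "a * sinv c * sinv (a * sinv c) = a * sinv a" .
      show ?thesis using 1 2 q by simp
    qed
    have yy: "sinv y * y = c * sinv c"
    proof -
      have "sinv (sinv x * y) * (sinv x * y) = sinv y * (x * sinv x) * y"
        by (simp add: sinv_mult[OF I] sinv_sinv[OF I] mult.assoc)
      also have "\<dots> = sinv y * y" by (simp add: xy mult.assoc s1)
      finally have 1: "sinv (sinv x * y) * (sinv x * y) = sinv y * y" .
      have "sinv (a * sinv c) * (a * sinv c) = c * (sinv a * a) * sinv c"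
        by (simp add: sinv_mult[OF I] sinv_sinv[OF I] mult.assoc)
      also have "\<dots> = c * sinv c" by (simp add: ac mult.assoc s1)
      finally have 2: "sinv (a * sinv c) * (a * sinv c) = c * sinv c" .
      show ?thesis using 1 2 q by simp
    qed
    have ydef: "y = x * (a * sinv c)"
    proof -
      have "y = y * sinv y * y" using s1(1)[of y] by (simp add: mult.assoc)
      also have "\<dots> = x * (sinv x * y)" by (simp add: xy[symmetric] mult.assoc)
      finally show ?thesis using q by simp
    qed
    have e1: "x * a = y * c"
    proof -
      have "y * c = x * (a * (sinv c * c))" by (simp add: ydef mult.assoc)
      also have "\<dots> = x * a" by (simp add: ac[symmetric] s1)
      finally show ?thesis by simp
    qed
    have e2: "x * b = y * d"
    proof -
      have "y * d = x * (a * (sinv c * d))" by (simp add: ydef mult.assoc)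
      also have "\<dots> = x * b" by (simp add: eq[symmetric] Ra)
      finally show ?thesis by simp
    qed
    have g1: "greenR x (x * a)"
    proof -
      have "x * a * sinv (x * a) = x * (a * sinv a) * sinv x"
        by (simp add: sinv_mult[OF I] mult.assoc)
      also have "\<dots> = x * sinv x" by (simp add: xx[symmetric] mult.assoc s1)
      finally show ?thesis using greenR_iff[OF I] by metis
    qed
    have g2: "greenL (x * a) a"
    proof -
      have "sinv (x * a) * (x * a) = sinv a * (sinv x * x) * a"
        by (simp add: sinv_mult[OF I] mult.assoc)
      also have "\<dots> = sinv a * a" by (simp add: xx mult.assoc s1)
      finally show ?thesis using greenL_iff[OF I] by metis
    qed
    have g3: "greenR y (y * c)"
    proof -
      have "y * c * sinv (y * c) = y * (c * sinv c) * sinv y"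
        by (simp add: sinv_mult[OF I] mult.assoc)
      also have "\<dots> = y * sinv y" by (simp add: yy[symmetric] mult.assoc s1)
      finally show ?thesis using greenR_iff[OF I] by metis
    qed
    have g4: "greenL (y * c) c"
    proof -
      have "sinv (y * c) * (y * c) = sinv c * (sinv y * y) * c"
        by (simp add: sinv_mult[OF I] mult.assoc)
      also have "\<dots> = sinv c * c" by (simp add: yy mult.assoc s1)
      finally show ?thesis using greenL_iff[OF I] by metis
    qed
    show "\<exists>x\<in>S. \<exists>y\<in>S. x * a = y * c \<and> x * b = y * d \<and>
       greenR x (x * a) \<and> greenL (x * a) a \<and>
       greenR y (y * c) \<and> greenL (y * c) c"
      using xS yS e1 e2 g1 g2 g3 g4 by blast
  next
    assume "\<exists>x\<in>S. \<exists>y\<in>S. x * a = y * c \<and> x * b = y * d \<and>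
       greenR x (x * a) \<and> greenL (x * a) a \<and>
       greenR y (y * c) \<and> greenL (y * c) c"
    then obtain x y where e1: "x * a = y * c" and e2: "x * b = y * d"
      and l1: "greenL (x * a) a" and l2: "greenL (y * c) c" by blast
    have L1: "sinv (x * a) * (x * a) = sinv a * a" using l1 greenL_iff[OF I] by blast
    have L2: "sinv (y * c) * (y * c) = sinv c * c" using l2 greenL_iff[OF I] by blast
    have A: "sinv a * b = sinv (x * a) * (x * b)"
    proof -
      have "sinv a * b = sinv a * a * (sinv a * b)" by (simp add: mult.assoc Ra)
      also have "\<dots> = sinv (x * a) * (x * a) * (sinv a * b)" by (simp add: L1)
      also have "\<dots> = sinv (x * a) * (x * (a * (sinv a * b)))" by (simp add: mult.assoc)
      also have "\<dots> = sinv (x * a) * (x * b)" by (simp add: Ra)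
      finally show ?thesis .
    qed
    have C: "sinv c * d = sinv (y * c) * (y * d)"
    proof -
      have "sinv c * d = sinv c * c * (sinv c * d)" by (simp add: mult.assoc Rc)
      also have "\<dots> = sinv (y * c) * (y * c) * (sinv c * d)" by (simp add: L2)
      also have "\<dots> = sinv (y * c) * (y * (c * (sinv c * d)))" by (simp add: mult.assoc)
      also have "\<dots> = sinv (y * c) * (y * d)" by (simp add: Rc)
      finally show ?thesis .
    qed
    show "sinv a * b = sinv c * d" using A C e1 e2 by simp
  qed
qed

end
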